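(* Let $(G,\precsim)$ be a compatible quasi-ordered abelian group such that $\precsim$ is an order (i.e. also antisymmetric) and $G$ is not isomorphic to $\mathbb{Z}/2\mathbb{Z}$. Then $(G,\precsim)$ is an ordered abelian group, i.e. $x\precsim y\Rightarrow x+z\precsim y+z$ for all $x,y,z\in G$.
   Context: A compatible quasi-ordered abelian group is an abelian group $G$ with a total quasi-order $\precsim$ (reflexive, transitive, any two elements comparable) such that, writing $a\sim b$ for $a\precsim b\wedge b\precsim a$: $(Q_1)$ $x\sim0\Rightarrow x=0$; $(Q_2)$ $x\precsim y\wedge y\not\sim z\Rightarrow x+z\precsim y+z$, for all $x,y,z$. *)

theory Defs
  imports Main "HOL-Library.Z2"
begin

definition total_quasi_order :: "('a \<Rightarrow> 'a \<Rightarrow> bool) \<Rightarrow> bool" where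
  "total_quasi_order le \<longleftrightarrow>
     (\<forall>x. le x x) \<and> (\<forall>x y z. le x y \<longrightarrow> le y z \<longrightarrow> le x z) \<and> (\<forall>x y. le x y \<or> le y x)"

definition qequiv :: "('a \<Rightarrow> 'a \<Rightarrow> bool) \<Rightarrow> 'a \<Rightarrow> 'a \<Rightarrow> bool" where
  "qequiv le x y \<longleftrightarrow> le x y \<and> le y x"

definition compatible_qo_group :: "('a::ab_group_add \<Rightarrow> 'a \<Rightarrow> bool) \<Rightarrow> bool" where
  "compatible_qo_group le \<longleftrightarrow> total_quasi_order le
     \<and> (\<forall>x. qequiv le x 0 \<longrightarrow> x = 0)
     \<and> (\<forall>x y z. le x y \<and> \<not> qequiv le y z \<longrightarrow> le (x + z) (y + z))"

text \<open>Group isomorphism of the additive group onto Z/2Z (HOL-Library type bit).\<close>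
definition iso_to_Z2 :: "'a::ab_group_add itself \<Rightarrow> bool" where
  "iso_to_Z2 _ \<longleftrightarrow> (\<exists>f :: 'a \<Rightarrow> bit. bij f \<and> (\<forall>x y. f (x + y) = f x + f y))"

end

theory Submission
  imports Defs
begin

theorem mainTheorem5:
  fixes le :: "'a::ab_group_add \<Rightarrow> 'a \<Rightarrow> bool"
  assumes "compatible_qo_group le"
    and "\<forall>x y. le x y \<and> le y x \<longrightarrow> x = y"
    and "\<not> iso_to_Z2 TYPE('a)"
  shows "\<forall>x y z. le x y \<longrightarrow> le (x + z) (y + z)"
proof -
  have refl: "\<And>x. le x x" and tot: "\<And>x y. le x y \<or> le y x"
    using assms(1) unfolding compatible_qo_group_def total_quasi_order_def by auto
  have anti: "\<And>x y. le x y \<Longrightarrow> le y x \<Longrightarrow> x = y" using assms(2) by blast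
  have sh: "\<And>a b z. le a b \<Longrightarrow> z \<noteq> b \<Longrightarrow> le (a + z) (b + z)"
    using assms(1) anti unfolding compatible_qo_group_def qequiv_def by blast
  show ?thesis
  proof (intro allI impI)
    fix x y z assume xy: "le x y"
    show "le (x + z) (y + z)"
    proof (cases "z = y")
      case False then show ?thesis using sh xy by blast
    next
      case True
      show ?thesis
      proof (cases "y + y = 0")
        case False
        have "-y \<noteq> y" using False by (metis add.inverse_unique neg_equal_iff_equal add.right_inverse)
        then have "le (x + -y) (y + -y)" using sh xy by blast
        then have "le (x + -y + (y+y)) (y + -y + (y+y))" using sh False by (metis add.right_inverse)
        then show ?thesis using True by (simp add: algebra_simps)
      next
        case yy: True
        show ?thesis
        proof (rule ccontr)
          assume nl: "\<not> le (x + z) (y + z)"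
          then have l2: "le 0 (x + y)" using tot True yy by metis
          have "x \<noteq> y" using nl refl by blast
          have x0: "x = 0"
          proof (rule ccontr)
            assume "x \<noteq> 0"
            then have "y \<noteq> x + y" by simp
            then have "le (0 + y) (x + y + y)" using sh l2 by blast
            then have "le y x" using yy by (simp add: add.assoc)
            then show False using anti xy \<open>x \<noteq> y\<close> by blast
          qed
          have y0: "y \<noteq> 0" using \<open>x \<noteq> y\<close> x0 by simp
          obtain a where a0: "a \<noteq> 0" and ay: "a \<noteq> y"
          proof (rule ccontr)
            assume "\<not> thesis"
            with that have all: "\<And>a. a = 0 \<or> a = y" by blast
            define f :: "'a \<Rightarrow> bit" where "f a = (if a = 0 then 0 else 1)" for a
            have "bij f"
            proof (rule bijI)
              show "inj f" unfolding inj_def f_def using all by auto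
              show "surj f" unfolding surj_def f_def
                by (metis (full_types) bit_not_one_iff y0)
            qed
            moreover have "\<forall>u v. f (u + v) = f u + f v"
              proof (intro allI)
              fix u v
              show "f (u + v) = f u + f v"
                using all[of u] all[of v] yy y0 unfolding f_def by auto
            qed
            ultimately have "iso_to_Z2 TYPE('a)" unfolding iso_to_Z2_def by blast
            then show False using assms(3) by blast
          qed
          have "le (0 + a) (y + a)" using sh xy x0 ay by blast
          then have "le (a + y) (y + a + y)" using sh a0 by simp
          then have "le (a + y) a" using yy by (simp add: algebra_simps)
          moreover have "le a (a + y)" using \<open>le (0 + a) (y + a)\<close> by (simp add: add.commute)
          ultimately have "a + y = a" using anti by blast
          then show False using y0 by simp
        qed
      qed
    qed
  qed
qed

end
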